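(* On the good event $\mathcal E$ (defined in the context), for every integer $k$ with $C''\le k\le K$ and every policy $\pi$, $$\hat V_1^\pi(\mu;\tilde c^k,\hat P^k)\le V_1^\pi(\mu;c,P).$$
   Context: Episodic constrained MDP. $\mathcal S,\mathcal A$ finite, $H\ge1$ integer. For each $h\in[H]$, $(s,a)$: unknown transition distribution $P_h(\cdot\mid s,a)$, unknown mean reward $r_h(s,a)\in[0,1]$, unknown mean cost $c_h(s,a)\in[0,1]$. Known initial distribution $\mu$, threshold $\tau\in(0,H]$. Policies are randomized Markov. $V_h^\pi(s;g,P'):=\mathbb E_{P',\pi}[\sum_{t=h}^Hg_t(S_t,A_t)\mid S_h=s]$, $V_1^\pi(\mu;g,P'):=\mathbb E_{S_1\sim\mu}V_1^\pi(S_1;g,P')$. There exists a policy $\pi^0$ with $V_1^{\pi^0}(\mu;c,P)=c^0<\tau$, $c^0$ known. Interaction over $K$ episodes: in episode $k$, $\pi^k$ is $\mathcal F_{k-1}$-measurable; $S_1^k\sim\mu$, $A_h^k\sim\pi_h^k(\cdot\mid S_h^k)$, observed $R_h^k=r_h(S_h^k,A_h^k)+\text{noise}$, $C_h^k=c_h(S_h^k,A_h^k)+\text{noise}$, $S_{h+1}^k\sim P_h(\cdot\mid S_h^k,A_h^k)$; $\mathcal F_k$ generated by all observations of episodes $1..k$; noises conditionally independent, zero mean, $\mathbb E[e^{\lambda\xi}\mid\mathcal F_{k-1}]\le e^{\lambda^2/4}$ for all real $\lambda$. Here the policies are those of OptPess-PrimalDual: $\lambda^1=0$, $\pi^k\in\arg\max_\pi\hat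 V_1^\pi(\mu;\tilde r^k,\hat P^k)-\frac{\lambda^k}{\eta^k}(\hat V_1^\pi(\mu;\tilde c^k,\hat P^k)-\tau)$, $\lambda^{k+1}=(\lambda^k+\hat V_1^{\pi^k}(\mu;\tilde c^k,\hat P^k)+\epsilon_k-\tau)_+$, $\eta^k=(\tau-c^0)H\sqrt k$. Estimates: $N_h^k(s,a)$ = visits of $(s,a)$ at step $h$ in episodes $1..k-1$; $\hat P_h^k,\hat r_h^k,\hat c_h^k$ empirical transition frequencies and means (denominator $N_h^k(s,a)\vee1$); $\delta\in(0,1)$, $Z:=\log(16|\mathcal S|^2|\mathcal A|HK/\delta)$, $\beta_h^k(s,a):=\sqrt{Z/(N_h^k(s,a)\vee1)}$; $\tilde r_h^k:=\hat r_h^k+(1+H|\mathcal S|)\beta_h^k$, $\tilde c_h^k:=\hat c_h^k-(1+H|\mathcal S|)\beta_h^k$, $\underline c_h^k:=\hat c_h^k+(1+H|\mathcal S|)\beta_h^k$; $\hat V_1^\pi(\mu;\tilde r^k,\hat P^k):=\min\{H,V_1^\pi(\mu;\tilde r^k,\hat P^k)\}$, $\hat V_1^\pi(\mu;\tilde c^k,\hat P^k):=\max\{0,V_1^\pi(\mu;\tilde c^k,\hat P^k)\}$. $\delta'=\delta/(16|\mathcal S|^2|\mathcal A|H)$, $\epsilon_k=5H^2\sqrt{|\mathcal S|^3|\mathcal A|}(\log\frac{k}{\delta'}+1)/\sqrt{k\log\frac{k}{\delta'}}$, and $C''$ is the smallest positive integer such that $\epsilon_k\le(\tau-c^0)/2$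 for all $k\ge C''$. Good event: with $q^{\pi^k}(s,a,h):=\mathbb P(S_h^k=s,A_h^k=a\mid\mathcal F_{k-1})$, for events $\mathcal G_k\in\mathcal F_{k-1}$ and $\delta_0$, $\mathcal E_{\mathcal G}(\delta_0)$ is the event that for all $K'\in[K]$, with $K'_{\mathcal G}=\sum_{k\le K'}\mathbb 1(\mathcal G_k)$: $\sum_{k\le K'}\sum_h\sum_{s,a}\frac{\mathbb 1(\mathcal G_k)q^{\pi^k}(s,a,h)}{N_h^k(s,a)\vee1}\le4H|\mathcal S||\mathcal A|+2H|\mathcal S||\mathcal A|\ln K'_{\mathcal G}+4\ln\frac{2HK}{\delta_0}$ and $\sum_{k\le K'}\sum_h\sum_{s,a}\frac{\mathbb 1(\mathcal G_k)q^{\pi^k}(s,a,h)}{\sqrt{N_h^k(s,a)\vee1}}\le6H|\mathcal S||\mathcal A|+2H\sqrt{|\mathcal S||\mathcal A|K'_{\mathcal G}}+2H|\mathcal S||\mathcal A|\ln K'_{\mathcal G}+5\ln\frac{2HK}{\delta_0}$; $\mathcal E_\Omega$ uses $\mathcal G_k=\Omega$, $\mathcal E_0$ uses $\mathcal G_k=\{V_1^{\pi^0}(\mu;\underline c^k,\hat P^k)\ge(\tau+c^0)/2\}$. $\mathcal E$ is the event that for all $k,h,s,s',a$: $|r_h(s,a)-\hat r_h^k(s,a)|\le\beta_h^k(s,a)$, $|c_h(s,a)-\hat c_h^k(s,a)|\le\beta_h^k(s,a)$, $|\hat P_h^k(s'\mid s,a)-P_h(s'\mid s,a)|\le\beta_h^k(s,a)$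 and $|\hat P_h^k(s'\mid s,a)-P_h(s'\mid s,a)|\le\sqrt{\frac{2P_h(s'\mid s,a)Z}{N_h^k(s,a)\vee1}}+\frac{Z}{3(N_h^k(s,a)\vee1)}$, intersected with $\mathcal E_\Omega(\delta/4)\cap\mathcal E_0(\delta/4)$. *)

theory Defs
  imports "HOL-Analysis.Analysis"
begin

(* Conventions: steps h in {1..H}, episodes k in {1..K}.
   Transition kernels are real-valued functions  P h s a s'  (so that the
   possibly sub-stochastic empirical kernel can be used as well);
   a randomized Markov policy is  pp h s a  = probability of action a in state s at step h. *)

type_synonym ('s,'a) kernel = "nat \<Rightarrow> 's \<Rightarrow> 'a \<Rightarrow> 's \<Rightarrow> real"
type_synonym ('s,'a) policy = "nat \<Rightarrow> 's \<Rightarrow> 'a \<Rightarrow> real"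
type_synonym ('s,'a) sfun = "nat \<Rightarrow> 's \<Rightarrow> 'a \<Rightarrow> real"

definition valid_policy :: "('s::finite,'a::finite) policy \<Rightarrow> bool" where
  "valid_policy pp \<longleftrightarrow> (\<forall>h s a. 0 \<le> pp h s a) \<and> (\<forall>h s. (\<Sum>a\<in>UNIV. pp h s a) = 1)"

(* Vrem m h s = value from step h with m remaining steps (h..h+m-1);
   V_h^pp(s; g, P') = Vrem (H+1-h) h s *)
primrec Vrem :: "('s::finite,'a::finite) kernel \<Rightarrow> ('s,'a) policy \<Rightarrow> ('s,'a) sfun
                 \<Rightarrow> nat \<Rightarrow> nat \<Rightarrow> 's \<Rightarrow> real" where
  "Vrem P pp g 0 h s = 0"
| "Vrem P pp g (Suc m) h s =
     (\<Sum>a\<in>UNIV. pp h s a * (g h s a + (\<Sum>s'\<in>UNIV. P h s a s' * Vrem P pp g m (Suc h) s')))"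

definition V1 :: "nat \<Rightarrow> ('s::finite \<Rightarrow> real) \<Rightarrow> ('s,'a::finite) kernel \<Rightarrow> ('s,'a) policy
                  \<Rightarrow> ('s,'a) sfun \<Rightarrow> real" where
  "V1 H mu P pp g = (\<Sum>s\<in>UNIV. mu s * Vrem P pp g H 1 s)"

(* state distribution at step m+1 under true kernel P *)
primrec sdist :: "('s::finite \<Rightarrow> real) \<Rightarrow> ('s,'a::finite) kernel \<Rightarrow> ('s,'a) policy
                  \<Rightarrow> nat \<Rightarrow> 's \<Rightarrow> real" where
  "sdist mu P pp 0 s = mu s"
| "sdist mu P pp (Suc m) s' =
     (\<Sum>s\<in>UNIV. \<Sum>a\<in>UNIV. sdist mu P pp m s * pp (Suc m) s a * P (Suc m) s a s')"

definition occ :: "('s::finite \<Rightarrow> real) \<Rightarrow> ('s,'a::finite) kernel \<Rightarrow> ('s,'a) policy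
                   \<Rightarrow> nat \<Rightarrow> 's \<Rightarrow> 'a \<Rightarrow> real" where
  "occ mu P pp h s a = sdist mu P pp (h - 1) s * pp h s a"

(* Empirical quantities from observed data: Sd k h, Ad k h, Rd k h, Cd k h
   = state, action, observed reward, observed cost at step h of episode k *)
definition visits :: "(nat \<Rightarrow> nat \<Rightarrow> 's) \<Rightarrow> (nat \<Rightarrow> nat \<Rightarrow> 'a) \<Rightarrow> nat \<Rightarrow> nat \<Rightarrow> 's \<Rightarrow> 'a \<Rightarrow> nat set" where
  "visits Sd Ad k h s a = {j\<in>{1..<k}. Sd j h = s \<and> Ad j h = a}"

definition Ncnt :: "(nat \<Rightarrow> nat \<Rightarrow> 's) \<Rightarrow> (nat \<Rightarrow> nat \<Rightarrow> 'a) \<Rightarrow> nat \<Rightarrow> nat \<Rightarrow> 's \<Rightarrow> 'a \<Rightarrow> nat" where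
  "Ncnt Sd Ad k h s a = card (visits Sd Ad k h s a)"

definition Nden :: "(nat \<Rightarrow> nat \<Rightarrow> 's) \<Rightarrow> (nat \<Rightarrow> nat \<Rightarrow> 'a) \<Rightarrow> nat \<Rightarrow> nat \<Rightarrow> 's \<Rightarrow> 'a \<Rightarrow> real" where
  "Nden Sd Ad k h s a = real (max (Ncnt Sd Ad k h s a) 1)"

definition Phat :: "(nat \<Rightarrow> nat \<Rightarrow> 's) \<Rightarrow> (nat \<Rightarrow> nat \<Rightarrow> 'a) \<Rightarrow> nat \<Rightarrow> ('s,'a) kernel" where
  "Phat Sd Ad k h s a s' =
     real (card {j\<in>visits Sd Ad k h s a. Sd j (Suc h) = s'}) / Nden Sd Ad k h s a"

definition emean :: "(nat \<Rightarrow> nat \<Rightarrow> 's) \<Rightarrow> (nat \<Rightarrow> nat \<Rightarrow> 'a) \<Rightarrow> (nat \<Rightarrow> nat \<Rightarrow> real)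
                     \<Rightarrow> nat \<Rightarrow> ('s,'a) sfun" where
  "emean Sd Ad Xd k h s a = (\<Sum>j\<in>visits Sd Ad k h s a. Xd j h) / Nden Sd Ad k h s a"

definition Zc :: "nat \<Rightarrow> nat \<Rightarrow> real \<Rightarrow> 's::finite itself \<Rightarrow> 'a::finite itself \<Rightarrow> real" where
  "Zc H K \<delta> _ _ = ln (16 * real (CARD('s))^2 * real (CARD('a)) * real H * real K / \<delta>)"

definition beta :: "real \<Rightarrow> (nat \<Rightarrow> nat \<Rightarrow> 's) \<Rightarrow> (nat \<Rightarrow> nat \<Rightarrow> 'a) \<Rightarrow> nat \<Rightarrow> ('s,'a) sfun" where
  "beta Z Sd Ad k h s a = sqrt (Z / Nden Sd Ad k h s a)"

definition bonus_coef :: "nat \<Rightarrow> 's::finite itself \<Rightarrow> real" where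
  "bonus_coef H _ = 1 + real H * real (CARD('s))"

definition rtil :: "nat \<Rightarrow> real \<Rightarrow> (nat \<Rightarrow> nat \<Rightarrow> 's::finite) \<Rightarrow> (nat \<Rightarrow> nat \<Rightarrow> 'a) \<Rightarrow> (nat \<Rightarrow> nat \<Rightarrow> real)
                    \<Rightarrow> nat \<Rightarrow> ('s,'a) sfun" where
  "rtil H Z Sd Ad Rd k h s a =
     emean Sd Ad Rd k h s a + bonus_coef H TYPE('s) * beta Z Sd Ad k h s a"

definition ctil :: "nat \<Rightarrow> real \<Rightarrow> (nat \<Rightarrow> nat \<Rightarrow> 's::finite) \<Rightarrow> (nat \<Rightarrow> nat \<Rightarrow> 'a) \<Rightarrow> (nat \<Rightarrow> nat \<Rightarrow> real)
                    \<Rightarrow> nat \<Rightarrow> ('s,'a) sfun" where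
  "ctil H Z Sd Ad Cd k h s a =
     emean Sd Ad Cd k h s a - bonus_coef H TYPE('s) * beta Z Sd Ad k h s a"

definition cund :: "nat \<Rightarrow> real \<Rightarrow> (nat \<Rightarrow> nat \<Rightarrow> 's::finite) \<Rightarrow> (nat \<Rightarrow> nat \<Rightarrow> 'a) \<Rightarrow> (nat \<Rightarrow> nat \<Rightarrow> real)
                    \<Rightarrow> nat \<Rightarrow> ('s,'a) sfun" where
  "cund H Z Sd Ad Cd k h s a =
     emean Sd Ad Cd k h s a + bonus_coef H TYPE('s) * beta Z Sd Ad k h s a"

definition hatVr :: "nat \<Rightarrow> real \<Rightarrow> ('s::finite \<Rightarrow> real) \<Rightarrow> (nat \<Rightarrow> nat \<Rightarrow> 's) \<Rightarrow> (nat \<Rightarrow> nat \<Rightarrow> 'a::finite)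
                     \<Rightarrow> (nat \<Rightarrow> nat \<Rightarrow> real) \<Rightarrow> nat \<Rightarrow> ('s,'a) policy \<Rightarrow> real" where
  "hatVr H Z mu Sd Ad Rd k pp = min (real H) (V1 H mu (Phat Sd Ad k) pp (rtil H Z Sd Ad Rd k))"

definition hatVc :: "nat \<Rightarrow> real \<Rightarrow> ('s::finite \<Rightarrow> real) \<Rightarrow> (nat \<Rightarrow> nat \<Rightarrow> 's) \<Rightarrow> (nat \<Rightarrow> nat \<Rightarrow> 'a::finite)
                     \<Rightarrow> (nat \<Rightarrow> nat \<Rightarrow> real) \<Rightarrow> nat \<Rightarrow> ('s,'a) policy \<Rightarrow> real" where
  "hatVc H Z mu Sd Ad Cd k pp = max 0 (V1 H mu (Phat Sd Ad k) pp (ctil H Z Sd Ad Cd k))"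

definition epsk :: "nat \<Rightarrow> real \<Rightarrow> 's::finite itself \<Rightarrow> 'a::finite itself \<Rightarrow> nat \<Rightarrow> real" where
  "epsk H \<delta> _ _ k =
     (let \<delta>' = \<delta> / (16 * real (CARD('s))^2 * real (CARD('a)) * real H) in
      5 * real H ^ 2 * sqrt (real (CARD('s)) ^ 3 * real (CARD('a))) * (ln (real k / \<delta>') + 1)
        / sqrt (real k * ln (real k / \<delta>')))"

definition Cpp :: "nat \<Rightarrow> real \<Rightarrow> real \<Rightarrow> real \<Rightarrow> 's::finite itself \<Rightarrow> 'a::finite itself \<Rightarrow> nat" where
  "Cpp H \<delta> \<tau> c0 ts ta =
     (LEAST n::nat. 0 < n \<and> (\<forall>k\<ge>n. epsk H \<delta> ts ta k \<le> (\<tau> - c0) / 2))"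

(* dual variable: lam m = lambda^{m+1} *)
primrec lam :: "nat \<Rightarrow> real \<Rightarrow> real \<Rightarrow> real \<Rightarrow> ('s::finite \<Rightarrow> real) \<Rightarrow> (nat \<Rightarrow> nat \<Rightarrow> 's)
                \<Rightarrow> (nat \<Rightarrow> nat \<Rightarrow> 'a::finite) \<Rightarrow> (nat \<Rightarrow> nat \<Rightarrow> real) \<Rightarrow> (nat \<Rightarrow> ('s,'a) policy)
                \<Rightarrow> nat \<Rightarrow> real" where
  "lam H Z \<delta> \<tau> mu Sd Ad Cd pol 0 = 0"
| "lam H Z \<delta> \<tau> mu Sd Ad Cd pol (Suc m) =
     max 0 (lam H Z \<delta> \<tau> mu Sd Ad Cd pol m + hatVc H Z mu Sd Ad Cd (Suc m) (pol (Suc m))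
            + epsk H \<delta> TYPE('s) TYPE('a) (Suc m) - \<tau>)"

definition optpess_policies ::
  "nat \<Rightarrow> nat \<Rightarrow> real \<Rightarrow> real \<Rightarrow> real \<Rightarrow> ('s::finite \<Rightarrow> real) \<Rightarrow> (nat \<Rightarrow> nat \<Rightarrow> 's)
   \<Rightarrow> (nat \<Rightarrow> nat \<Rightarrow> 'a::finite) \<Rightarrow> (nat \<Rightarrow> nat \<Rightarrow> real) \<Rightarrow> (nat \<Rightarrow> nat \<Rightarrow> real)
   \<Rightarrow> (nat \<Rightarrow> ('s,'a) policy) \<Rightarrow> bool" where
  "optpess_policies H K \<delta> \<tau> c0 mu Sd Ad Rd Cd pol \<longleftrightarrow>
     (let Z = Zc H K \<delta> TYPE('s) TYPE('a);
          L = (\<lambda>k pp. hatVr H Z mu Sd Ad Rd k pp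
                 - lam H Z \<delta> \<tau> mu Sd Ad Cd pol (k - 1) / ((\<tau> - c0) * real H * sqrt (real k))
                   * (hatVc H Z mu Sd Ad Cd k pp - \<tau>))
      in \<forall>k\<in>{1..K}. valid_policy (pol k) \<and>
                    (\<forall>pp. valid_policy pp \<longrightarrow> L k pp \<le> L k (pol k)))"

definition event_EG ::
  "nat \<Rightarrow> nat \<Rightarrow> ('s::finite \<Rightarrow> real) \<Rightarrow> ('s,'a::finite) kernel \<Rightarrow> (nat \<Rightarrow> nat \<Rightarrow> 's)
   \<Rightarrow> (nat \<Rightarrow> nat \<Rightarrow> 'a) \<Rightarrow> (nat \<Rightarrow> ('s,'a) policy) \<Rightarrow> (nat \<Rightarrow> bool) \<Rightarrow> real \<Rightarrow> bool" where
  "event_EG H K mu P Sd Ad pol G \<delta>0 \<longleftrightarrow>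
     (let SA = real (CARD('s)) * real (CARD('a)) in
      \<forall>K'\<in>{1..K}.
        (let KG = real (card {k\<in>{1..K'}. G k}) in
         (\<Sum>k\<in>{1..K'}. \<Sum>h\<in>{1..H}. \<Sum>s\<in>UNIV. \<Sum>a\<in>UNIV.
             (if G k then occ mu P (pol k) h s a else 0) / Nden Sd Ad k h s a)
           \<le> 4 * real H * SA + 2 * real H * SA * ln KG + 4 * ln (2 * real H * real K / \<delta>0)
         \<and>
         (\<Sum>k\<in>{1..K'}. \<Sum>h\<in>{1..H}. \<Sum>s\<in>UNIV. \<Sum>a\<in>UNIV.
             (if G k then occ mu P (pol k) h s a else 0) / sqrt (Nden Sd Ad k h s a))
           \<le> 6 * real H * SA + 2 * real H * sqrt (SA * KG) + 2 * real H * SA * ln KG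
              + 5 * ln (2 * real H * real K / \<delta>0)))"

(* the good event E (as a property of an observed sample path) *)
definition good_event ::
  "nat \<Rightarrow> nat \<Rightarrow> real \<Rightarrow> real \<Rightarrow> ('s::finite \<Rightarrow> real) \<Rightarrow> ('s,'a::finite) kernel
   \<Rightarrow> ('s,'a) sfun \<Rightarrow> ('s,'a) sfun \<Rightarrow> ('s,'a) policy
   \<Rightarrow> (nat \<Rightarrow> nat \<Rightarrow> 's) \<Rightarrow> (nat \<Rightarrow> nat \<Rightarrow> 'a) \<Rightarrow> (nat \<Rightarrow> nat \<Rightarrow> real) \<Rightarrow> (nat \<Rightarrow> nat \<Rightarrow> real)
   \<Rightarrow> (nat \<Rightarrow> ('s,'a) policy) \<Rightarrow> bool" where
  "good_event H K \<delta> \<tau> mu P r c pz Sd Ad Rd Cd pol \<longleftrightarrow>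
     (let Z = Zc H K \<delta> TYPE('s) TYPE('a);
          c0 = V1 H mu P pz c in
      (\<forall>k\<in>{1..K}. \<forall>h\<in>{1..H}. \<forall>s a s'.
          \<bar>r h s a - emean Sd Ad Rd k h s a\<bar> \<le> beta Z Sd Ad k h s a
        \<and> \<bar>c h s a - emean Sd Ad Cd k h s a\<bar> \<le> beta Z Sd Ad k h s a
        \<and> \<bar>Phat Sd Ad k h s a s' - P h s a s'\<bar> \<le> beta Z Sd Ad k h s a
        \<and> \<bar>Phat Sd Ad k h s a s' - P h s a s'\<bar>
            \<le> sqrt (2 * P h s a s' * Z / Nden Sd Ad k h s a) + Z / (3 * Nden Sd Ad k h s a))
      \<and> event_EG H K mu P Sd Ad pol (\<lambda>k. True) (\<delta> / 4)
      \<and> event_EG H K mu P Sd Ad pol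
          (\<lambda>k. V1 H mu (Phat Sd Ad k) pz (cund H Z Sd Ad Cd k) \<ge> (\<tau> + c0) / 2) (\<delta> / 4))"

end

theory Submission
  imports Defs
begin

lemma vrem_bounds:
  fixes P :: "('s::finite,'a::finite) kernel"
  assumes P: "\<forall>h s a s'. 0 \<le> P h s a s'" "\<forall>h s a. (\<Sum>s'\<in>UNIV. P h s a s') = 1"
    and c: "\<forall>h s a. 0 \<le> c h s a \<and> c h s a \<le> 1"
    and pp: "valid_policy pp"
  shows "0 \<le> Vrem P pp c m h s \<and> Vrem P pp c m h s \<le> real m"
proof (induction m arbitrary: h s)
  case 0
  then show ?case by simp
next
  case (Suc m)
  have pp0: "\<And>h s a. 0 \<le> pp h s a" and pp1: "\<And>h s. (\<Sum>a\<in>UNIV. pp h s a) = 1"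
    using pp unfolding valid_policy_def by auto
  have lo: "\<And>a. 0 \<le> pp h s a * (c h s a + (\<Sum>s'\<in>UNIV. P h s a s' * Vrem P pp c m (Suc h) s'))"
    using pp0 c P Suc.IH by (intro mult_nonneg_nonneg add_nonneg_nonneg sum_nonneg) auto
  have up: "\<And>a. pp h s a * (c h s a + (\<Sum>s'\<in>UNIV. P h s a s' * Vrem P pp c m (Suc h) s'))
      \<le> pp h s a * (1 + real m)"
  proof -
    fix a
    have "(\<Sum>s'\<in>UNIV. P h s a s' * Vrem P pp c m (Suc h) s') \<le> (\<Sum>s'\<in>UNIV. P h s a s' * real m)"
      using P Suc.IH by (intro sum_mono mult_left_mono) auto
    also have "\<dots> = real m" using P by (simp add: sum_distrib_right[symmetric])
    finally show "pp h s a * (c h s a + (\<Sum>s'\<in>UNIV. P h s a s' * Vrem P pp c m (Suc h) s'))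
      \<le> pp h s a * (1 + real m)"
      using c pp0 by (intro mult_left_mono) (auto intro: add_mono)
  qed
  have "Vrem P pp c (Suc m) h s \<le> (\<Sum>a\<in>UNIV. pp h s a * (1 + real m))"
    by (simp only: Vrem.simps) (intro sum_mono up)
  also have "\<dots> = 1 + real m" using pp1 by (simp add: sum_distrib_right[symmetric])
  finally show ?case using lo by (simp add: sum_nonneg)
qed

lemma sim:
  fixes P Ph :: "('s::finite,'a::finite) kernel"
  assumes P: "\<forall>h s a s'. 0 \<le> P h s a s'" "\<forall>h s a. (\<Sum>s'\<in>UNIV. P h s a s') = 1"
    and c: "\<forall>h s a. 0 \<le> c h s a \<and> c h s a \<le> 1"
    and pp: "valid_policy pp"
    and Ph: "\<forall>h s a s'. 0 \<le> Ph h s a s'"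
    and cond: "\<forall>h s a. 1 \<le> h \<longrightarrow> h \<le> H \<longrightarrow>
        ct h s a - c h s a \<le> - (real H * real CARD('s)) * b h s a
        \<and> (\<forall>s'. \<bar>Ph h s a s' - P h s a s'\<bar> \<le> b h s a)"
  shows "1 \<le> h \<Longrightarrow> h + m \<le> H + 1 \<Longrightarrow> Vrem Ph pp ct m h s \<le> Vrem P pp c m h s"
proof (induction m arbitrary: h s)
  case 0
  then show ?case by simp
next
  case (Suc m)
  have pp0: "\<And>h s a. 0 \<le> pp h s a"
    using pp unfolding valid_policy_def by auto
  have hH: "1 \<le> h" "h \<le> H" using Suc.prems by auto
  have IH: "\<And>s'. Vrem Ph pp ct m (Suc h) s' \<le> Vrem P pp c m (Suc h) s'"
    using Suc.prems by (intro Suc.IH) auto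
  have VB: "\<And>s'. 0 \<le> Vrem P pp c m (Suc h) s' \<and> Vrem P pp c m (Suc h) s' \<le> real m"
    using vrem_bounds[OF P c pp] by blast
  have mH: "real m \<le> real H" using Suc.prems by simp
  have each: "ct h s a + (\<Sum>s'\<in>UNIV. Ph h s a s' * Vrem Ph pp ct m (Suc h) s')
      \<le> c h s a + (\<Sum>s'\<in>UNIV. P h s a s' * Vrem P pp c m (Suc h) s')" for a
  proof -
    have cd: "ct h s a - c h s a \<le> - (real H * real CARD('s)) * b h s a"
      and pd: "\<And>s'. \<bar>Ph h s a s' - P h s a s'\<bar> \<le> b h s a"
      using cond hH by auto
    have b0: "0 \<le> b h s a" using pd[of undefined] by linarith
    have s1: "(\<Sum>s'\<in>UNIV. Ph h s a s' * Vrem Ph pp ct m (Suc h) s')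
        \<le> (\<Sum>s'\<in>UNIV. Ph h s a s' * Vrem P pp c m (Suc h) s')"
      using Ph IH by (intro sum_mono mult_left_mono) auto
    have t: "Ph h s a s' * V - P h s a s' * V \<le> b h s a * real H"
      if "0 \<le> V" "V \<le> real m" for s' V
    proof -
      have "Ph h s a s' * V - P h s a s' * V = (Ph h s a s' - P h s a s') * V"
        by (simp add: algebra_simps)
      also have "\<dots> \<le> \<bar>Ph h s a s' - P h s a s'\<bar> * V" using that
        by (intro mult_right_mono) auto
      also have "\<dots> \<le> b h s a * real H" using that pd[of s'] b0 mH
        by (intro mult_mono) auto
      finally show ?thesis .
    qed
    have s2: "(\<Sum>s'\<in>UNIV. Ph h s a s' * Vrem P pp c m (Suc h) s')
        - (\<Sum>s'\<in>UNIV. P h s a s' * Vrem P pp c m (Suc h) s') \<le> real CARD('s) * (b h s a * real H)"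
    proof -
      have "(\<Sum>s'\<in>UNIV. Ph h s a s' * Vrem P pp c m (Suc h) s')
        - (\<Sum>s'\<in>UNIV. P h s a s' * Vrem P pp c m (Suc h) s')
        = (\<Sum>s'\<in>UNIV. Ph h s a s' * Vrem P pp c m (Suc h) s' - P h s a s' * Vrem P pp c m (Suc h) s')"
        by (simp add: sum_subtractf)
      also have "\<dots> \<le> (\<Sum>s'\<in>(UNIV::'s set). b h s a * real H)"
        using t VB by (intro sum_mono) auto
      also have "\<dots> = real CARD('s) * (b h s a * real H)" by simp
      finally show ?thesis .
    qed
    have "real CARD('s) * (b h s a * real H) = (real H * real CARD('s)) * b h s a" by simp
    have eq: "- (real H * real CARD('s)) * b h s a = - (real CARD('s) * (b h s a * real H))" by simp
    show ?thesis using s1 s2 cd unfolding eq by linarith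
  qed
  show ?case
    by (simp only: Vrem.simps) (intro sum_mono mult_left_mono each pp0)
qed

theorem lemmaC1:
  fixes H K :: nat and \<delta> \<tau> c0 :: real
    and mu :: "'s::finite \<Rightarrow> real" and P :: "('s,'a::finite) kernel"
    and r c :: "('s,'a) sfun" and pz :: "('s,'a) policy"
    and Sd :: "nat \<Rightarrow> nat \<Rightarrow> 's" and Ad :: "nat \<Rightarrow> nat \<Rightarrow> 'a"
    and Rd Cd :: "nat \<Rightarrow> nat \<Rightarrow> real"
    and pol :: "nat \<Rightarrow> ('s,'a) policy"
    and pp :: "('s,'a) policy" and k :: nat
  assumes H: "1 \<le> H" and K: "1 \<le> K"
    and mu: "\<forall>s. 0 \<le> mu s" "(\<Sum>s\<in>UNIV. mu s) = 1"
    and P: "\<forall>h s a s'. 0 \<le> P h s a s'" "\<forall>h s a. (\<Sum>s'\<in>UNIV. P h s a s') = 1"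
    and r: "\<forall>h s a. 0 \<le> r h s a \<and> r h s a \<le> 1"
    and c: "\<forall>h s a. 0 \<le> c h s a \<and> c h s a \<le> 1"
    and tau: "0 < \<tau>" "\<tau> \<le> real H"
    and delta: "0 < \<delta>" "\<delta> < 1"
    and pz: "valid_policy pz" "V1 H mu P pz c = c0" "c0 < \<tau>"
    and alg: "optpess_policies H K \<delta> \<tau> c0 mu Sd Ad Rd Cd pol"
    and E: "good_event H K \<delta> \<tau> mu P r c pz Sd Ad Rd Cd pol"
    and k: "Cpp H \<delta> \<tau> c0 TYPE('s) TYPE('a) \<le> k" "k \<le> K"
    and pp: "valid_policy pp"
  shows "hatVc H (Zc H K \<delta> TYPE('s) TYPE('a)) mu Sd Ad Cd k pp \<le> V1 H mu P pp c"
proof -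
  define Z where "Z = Zc H K \<delta> TYPE('s) TYPE('a)"
  have pp0: "\<And>h s a. 0 \<le> pp h s a"
    using pp unfolding valid_policy_def by auto
  have Ph: "\<forall>h s a s'. 0 \<le> Phat Sd Ad k h s a s'"
    by (auto simp: Phat_def Nden_def)
  have V0: "0 \<le> V1 H mu P pp c"
    unfolding V1_def using mu vrem_bounds[OF P c pp]
    by (intro sum_nonneg mult_nonneg_nonneg) auto
  have main: "V1 H mu (Phat Sd Ad k) pp (ctil H Z Sd Ad Cd k) \<le> V1 H mu P pp c"
  proof (cases "k = 0")
    case True
    have Pz: "Phat Sd Ad k h s a s' = 0" for h s a s'
      using True by (simp add: Phat_def visits_def)
    have Z0: "0 \<le> Z"
    proof -
      have "0 < 16 * (CARD('s))^2 * (CARD('a)) * H * K"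
        using H K by simp
      then have "1 \<le> real (16 * (CARD('s))^2 * (CARD('a)) * H * K)"
        by linarith
      then have "1 \<le> 16 * real (CARD('s))^2 * real (CARD('a)) * real H * real K"
        by simp
      then have "1 \<le> 16 * real (CARD('s))^2 * real (CARD('a)) * real H * real K / \<delta>"
        using delta by (simp add: le_divide_eq)
      then show ?thesis unfolding Z_def Zc_def by simp
    qed
    have ct: "ctil H Z Sd Ad Cd k h s a \<le> 0" for h s a
      using True Z0 by (simp add: ctil_def emean_def visits_def beta_def Nden_def Ncnt_def
          bonus_coef_def)
    have "Vrem (Phat Sd Ad k) pp (ctil H Z Sd Ad Cd k) H 1 s \<le> 0" for s
    proof (cases H)
      case 0 then show ?thesis by simp
    next
      case (Suc m)
      have "Vrem (Phat Sd Ad k) pp (ctil H Z Sd Ad Cd k) (Suc m) 1 s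
          = (\<Sum>a\<in>UNIV. pp 1 s a * ctil H Z Sd Ad Cd k 1 s a)"
        by (simp only: Vrem.simps Pz mult_zero_left sum.neutral_const add_0_right)
      also have "\<dots> \<le> 0"
        by (intro sum_nonpos mult_nonneg_nonpos pp0 ct)
      finally show ?thesis using Suc by simp
    qed
    then have "V1 H mu (Phat Sd Ad k) pp (ctil H Z Sd Ad Cd k) \<le> 0"
      unfolding V1_def using mu by (intro sum_nonpos mult_nonneg_nonpos) auto
    then show ?thesis using V0 by linarith
  next
    case False
    have kK: "k \<in> {1..K}" using False k by auto
    have EE: "\<forall>h\<in>{1..H}. \<forall>s a s'.
          \<bar>c h s a - emean Sd Ad Cd k h s a\<bar> \<le> beta Z Sd Ad k h s a
        \<and> \<bar>Phat Sd Ad k h s a s' - P h s a s'\<bar> \<le> beta Z Sd Ad k h s a"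
      using E kK unfolding good_event_def Let_def Z_def by blast
    have cond: "\<forall>h s a. 1 \<le> h \<longrightarrow> h \<le> H \<longrightarrow>
        ctil H Z Sd Ad Cd k h s a - c h s a \<le> - (real H * real CARD('s)) * beta Z Sd Ad k h s a
        \<and> (\<forall>s'. \<bar>Phat Sd Ad k h s a s' - P h s a s'\<bar> \<le> beta Z Sd Ad k h s a)"
    proof (intro allI impI conjI)
      fix h s a assume h: "1 \<le> h" "h \<le> H"
      have "\<bar>c h s a - emean Sd Ad Cd k h s a\<bar> \<le> beta Z Sd Ad k h s a" using EE h by auto
      then show "ctil H Z Sd Ad Cd k h s a - c h s a \<le> - (real H * real CARD('s)) * beta Z Sd Ad k h s a"
        unfolding ctil_def bonus_coef_def by (simp add: algebra_simps)
    next
      fix h s a s' assume h: "1 \<le> h" "h \<le> H"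
      show "\<bar>Phat Sd Ad k h s a s' - P h s a s'\<bar> \<le> beta Z Sd Ad k h s a" using EE h by auto
    qed
    have "Vrem (Phat Sd Ad k) pp (ctil H Z Sd Ad Cd k) H 1 s \<le> Vrem P pp c H 1 s" for s
      by (rule sim[OF P c pp Ph cond]) auto
    then show ?thesis unfolding V1_def using mu
      by (intro sum_mono mult_left_mono) auto
  qed
  show ?thesis unfolding hatVc_def Z_def[symmetric] using main V0 by simp
qed

end
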